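(* Let $n\ge 4$ and $\bar K>0$. For all $x\ge 0$ the functions $a,\mathring a$ satisfy: (i) $\frac{4x(\mathring a'(x))^2}{\mathring a(x)}<1$; (ii) $2x\mathring a''(x)+\mathring a'(x)<\frac{2(n-1)}{n(n+2)}$; (iii) $\frac{n-2}{\sqrt{n(n-1)}}\sqrt{x\,\mathring a(x)}+\mathring a(x)<\frac{x}{n}+n\bar K$; (iv) $n\bar K(\mathring a+x\mathring a')-a(\mathring a-x\mathring a')\ge\frac{2n(n-2)(n-1)^2\bar K^4}{\big(x+\sqrt{2+\sqrt{2n}}\,(n-1)\bar K\big)^2}$; (v) $2\mathring a-\frac{x}{n}+x\mathring a'\le 2\sqrt{2n}\,\bar K-\frac{(n-4)x}{n(n-1)}-\frac{6(\sqrt{2n}-2)\bar K x}{3x+2\sqrt{2n}(n-1)\bar K}$; (vi) $\frac{x}{n-1}(a+n\bar K)-\Big(\frac{x}{n-1}+2n\bar K\Big)\big(\mathring a+a-n\bar K-x\mathring a'\big)<-\frac{2x\bar K}{n-1}+2n(n-4)\bar K^2$, where $a,\mathring a,\mathring a',\mathring a''$ are evaluated at $x$.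
   Context: For $x\ge0$: $a(x)=\sqrt{\big(\frac{x}{n-1}+2\bar K\big)^2+(2n-4)\bar K^2}$ and $\mathring a(x)=a(x)-\frac{x}{n}$; primes denote derivatives in $x$. *)

theory Defs
  imports "HOL-Analysis.Analysis"
begin

definition a_fun :: "nat \<Rightarrow> real \<Rightarrow> real \<Rightarrow> real" where
  "a_fun n K x = sqrt ((x / (real n - 1) + 2 * K)^2 + (2 * real n - 4) * K^2)"

definition ar_fun :: "nat \<Rightarrow> real \<Rightarrow> real \<Rightarrow> real" where
  "ar_fun n K x = a_fun n K x - x / real n"

end

theory Submission
  imports Defs
begin

lemma sq_lt: fixes X Y :: real assumes "X^2 < Y^2" "0 \<le> Y" shows "X < Y"
  using assms power_less_imp_less_base[of "\<bar>X\<bar>" 2 Y] by simp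
lemma sq_le: fixes X Y :: real assumes "X^2 \<le> Y^2" "0 \<le> Y" shows "X \<le> Y"
  using assms power2_le_imp_le[of "\<bar>X\<bar>" Y] by simp
lemma poly1_id: "N = M + 4 \<Longrightarrow> ((t+2)^2 + (2* N-4)) * (t^2* N^3 + 7* t^2* N^2 - 8* t^2* N + 4* t* N^3 + 12* t* N^2 - 16* t* N + 2* N^4 - 2* N^3)^2 - (t^3* N^3 + 6* t^3* N^2 - 7* t^3* N + 4* t^3 + 4* t^2* N^3 + 24* t^2* N^2 - 28* t^2* N + 16* t^2 + 2* t* N^4 + 4* t* N^3 + 2* t* N^2 + 8* t* N)^2 = (1179648) + (2* t^6* M^5 + 51* t^6* M^4 + 460* t^6* M^3 + 1871* t^6* M^2 + 3440* t^6* M + 2240* t^6 + 4* t^5* M^6 + 136* t^5* M^5 + 1788* t^5* M^4 + 11712* t^5* M^3 + 40312* t^5* M^2 + 68992* t^5* M + 45568* t^5 + 2* t^4* M^7 + 108* t^4* M^6 + 2126* t^4* M^5 + 20840* t^4* M^4 + 112796* t^4* M^3 + 341664* t^4* M^2 + 539904* t^4* M + 344064* t^4 + 32* t^3* M^7 + 1120* t^3* M^6 + 16208* t^3* M^5 + 126464* t^3* M^4 + 575600* t^3* M^3 + 1528512* t^3* M^2 + 2191360* t^3* M + 1306624* t^3 + 8* t^2* M^8 + 376* t^2* M^7 + 7124* t^2* M^6 + 72912* t^2* M^5 + 446780* t^2* M^4 + 1691552* t^2* M^3 + 3883200* t^2* M^2 + 4957184* t^2* M + 2699264* t^2 + 48*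 t* M^8 + 1568* t* M^7 + 22192* t* M^6 + 177920* t* M^5 + 884480* t* M^4 + 2793472* t* M^3 + 5476352* t* M^2 + 6094848* t* M + 2949120* t + 8* M^9 + 272* M^8 + 4104* M^7 + 36064* M^6 + 203392* M^5 + 763392* M^4 + 1906688* M^3 + 3055616* M^2 + 2850816* M)" for N t A M :: real
  by algebra

lemma poly1:
  fixes N t A :: real
  assumes "N \<ge> 4" and t: "t \<ge> 0" and A: "A > 0" and A2: "A^2 = (t+2)^2 + (2* N-4)"
  shows "(N* A - (N-1)* t)* N*(N-1)* A^2 - 4* t*(N*(t+2) - (N-1)* A)^2 > 0"
proof -
  define M where "M = N - 4"
  have NM: "N = M + 4" unfolding M_def by simp
  have hyp: "M \<ge> 0" "t \<ge> 0" using assms unfolding M_def by auto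
  define P where "P = (t^2* N^3 + 7* t^2* N^2 - 8* t^2* N + 4* t* N^3 + 12* t* N^2 - 16* t* N + 2* N^4 - 2* N^3)"
  define Q where "Q = (t^3* N^3 + 6* t^3* N^2 - 7* t^3* N + 4* t^3 + 4* t^2* N^3 + 24* t^2* N^2 - 28* t^2* N + 16* t^2 + 2* t* N^4 + 4* t* N^3 + 2* t* N^2 + 8* t* N)"
  have e: "(N* A - (N-1)* t)* N*(N-1)* A^2 - 4* t*(N*(t+2) - (N-1)* A)^2 = A* P - Q"
    unfolding P_def Q_def using A2 by algebra
  have Pp0: "0 \<le> (t^2* N^3 + 7* t^2* N^2 - 8* t^2* N + 4* t* N^3 + 12* t* N^2 - 16* t* N + 2* N^4 - 2* N^3)" 
  proof -
    have "(t^2* N^3 + 7* t^2* N^2 - 8* t^2* N + 4* t* N^3 + 12* t* N^2 - 16* t* N + 2* N^4 - 2* N^3) = (t^2* M^3 + 19* t^2* M^2 + 96* t^2* M + 144* t^2 + 4* t* M^3 + 60* t* M^2 + 272* t* M + 384* t + 2* M^4 + 30* M^3 + 168* M^2 + 416* M + 384)" using NM by algebra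
    also have "0 \<le> ..." by (auto intro!: add_nonneg_nonneg mult_nonneg_nonneg simp: hyp)
    finally show ?thesis .
  qed
  have Pp: "0 \<le> P" unfolding P_def by (rule Pp0)
  define EE where "EE = (1179648) + (2* t^6* M^5 + 51* t^6* M^4 + 460* t^6* M^3 + 1871* t^6* M^2 + 3440* t^6* M + 2240* t^6 + 4* t^5* M^6 + 136* t^5* M^5 + 1788* t^5* M^4 + 11712* t^5* M^3 + 40312* t^5* M^2 + 68992* t^5* M + 45568* t^5 + 2* t^4* M^7 + 108* t^4* M^6 + 2126* t^4* M^5 + 20840* t^4* M^4 + 112796* t^4* M^3 + 341664* t^4* M^2 + 539904* t^4* M + 344064* t^4 + 32* t^3* M^7 + 1120* t^3* M^6 + 16208* t^3* M^5 + 126464* t^3* M^4 + 575600* t^3* M^3 + 1528512* t^3* M^2 + 2191360* t^3* M + 1306624* t^3 + 8* t^2* M^8 + 376* t^2* M^7 + 7124* t^2* M^6 + 72912* t^2* M^5 + 446780* t^2* M^4 + 1691552* t^2* M^3 + 3883200* t^2* M^2 + 4957184* t^2* M + 2699264* t^2 + 48* t* M^8 + 1568* t* M^7 + 22192* t* M^6 + 177920* t* M^5 + 884480* t* M^4 + 2793472* t* M^3 + 5476352* t* M^2 + 6094848* t* M + 2949120* t + 8* M^9 + 272* M^8 + 4104* M^7 + 36064* M^6 + 203392* M^5 + 763392* M^4 + 1906688* M^3 + 3055616* M^2 + 2850816* M)"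
  have EEp: "EE > 0" unfolding EE_def by (intro add_pos_nonneg) (auto intro!: add_nonneg_nonneg mult_nonneg_nonneg simp: hyp)
  have "(A* P)^2 - Q^2 = ((t+2)^2 + (2* N-4)) * P^2 - Q^2" by (simp add: power_mult_distrib A2)
  also have "... = EE" unfolding P_def Q_def EE_def using NM by (rule poly1_id)
  finally have "(A* P)^2 - Q^2 = EE" .
  hence "Q^2 < (A* P)^2" using EEp by linarith
  moreover have "0 \<le> A* P" using Pp A by simp
  ultimately have "Q < A* P" by (rule sq_lt)
  thus ?thesis using e by linarith
qed

lemma poly4_id: "s = w^2 - 2 \<Longrightarrow> w = z + 219/100 \<Longrightarrow> (t^2 + 4* t + s^2) * (t^2 + 2* t* w - t + w^2 - 2)^2 - (t^3 + 2* t^2* w + t^2 + t* w^2 + 4* t + s^2)^2 = (t^4* z^4 + (219/25)* t^4* z^3 + (123883/5000)* t^4* z^2 + (8123459/250000)* t^4* z + (533817521/100000000)* t^4 + 4* t^3* z^5 + (199/5)* t^3* z^4 + (35201/250)* t^3* z^3 + (5897799/25000)* t^3* z^2 + (977316801/5000000)* t^3* z + (73841284999/2500000000)* t^3 + 6* t^2* z^6 + (1771/25)* t^2* z^5 + (315049/1000)* t^2* z^4 + (16767177/25000)* t^2* z^3 + (7347936489/10000000)* t^2* z^2 + (1016942942891/2500000000)* t^2* z + (27484269509443/500000000000)* t^2 + 4* t* z^7 + (1433/25)* t* z^6 + (815781/2500)* t* z^5 + (46795913/50000)* t* z^4 + (7085899047/5000000)* t* z^3 + (2725886657579/2500000000)*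 t* z^2 + (95122406193367/250000000000)* t* z + (1037752522857039/25000000000000)* t)" for t A s w z :: real
  by algebra

lemma poly4:
  fixes t A s w :: real
  assumes "s \<ge> 0" and w: "w \<ge> 219/100" and sw: "s = w^2 - 2" and t: "t \<ge> 0" and A: "A > 0" and A2: "A^2 = t^2 + 4* t + s^2"
  shows "(A - t)*(t+w)^2 \<ge> A*(A+t+2)"
proof -
  define z where "z = w - 219/100"
  have wv: "w = z + 219/100" unfolding z_def by simp
  have hyp: "z \<ge> 0" "t \<ge> 0" using assms unfolding z_def by auto
  define P where "P = (t^2 + 2* t* w - t + w^2 - 2)"
  define Q where "Q = (t^3 + 2* t^2* w + t^2 + t* w^2 + 4* t + s^2)"
  have e: "(A - t)*(t+w)^2 - A*(A+t+2) = A* P - Q"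
    unfolding P_def Q_def using A2 by algebra
  have Pp0: "0 \<le> (t^2 + 2* t* w - t + w^2 - 2)" 
  proof -
    have h1: "(219/100)*(219/100) \<le> w* w" using w by (intro mult_mono) auto
    have h2: "t*1 \<le> t*(2* w)" using w t by (intro mult_left_mono) auto
    have tt: "0 \<le> t* t" using t by simp
    have h3: "t \<le> 2* t* w" using h2 by (simp add: algebra_simps)
    show ?thesis unfolding power2_eq_square using h1 h3 tt by linarith
  qed
  have Pp: "0 \<le> P" unfolding P_def by (rule Pp0)
  define EE where "EE = (t^4* z^4 + (219/25)* t^4* z^3 + (123883/5000)* t^4* z^2 + (8123459/250000)* t^4* z + (533817521/100000000)* t^4 + 4* t^3* z^5 + (199/5)* t^3* z^4 + (35201/250)* t^3* z^3 + (5897799/25000)* t^3* z^2 + (977316801/5000000)* t^3* z + (73841284999/2500000000)* t^3 + 6* t^2* z^6 + (1771/25)* t^2* z^5 + (315049/1000)* t^2* z^4 + (16767177/25000)* t^2* z^3 + (7347936489/10000000)* t^2* z^2 + (1016942942891/2500000000)* t^2* z + (27484269509443/500000000000)* t^2 + 4* t* z^7 + (1433/25)* t* z^6 + (815781/2500)* t* z^5 + (46795913/50000)* t* z^4 + (7085899047/5000000)* t* z^3 + (2725886657579/2500000000)* t* z^2 + (95122406193367/250000000000)* t* z + (1037752522857039/25000000000000)* t)"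
  have EEp: "EE \<ge> 0" unfolding EE_def by (auto intro!: add_nonneg_nonneg mult_nonneg_nonneg simp: hyp)
  have "(A* P)^2 - Q^2 = (t^2 + 4* t + s^2) * P^2 - Q^2" by (simp add: power_mult_distrib A2)
  also have "... = EE" unfolding P_def Q_def EE_def using sw wv by (rule poly4_id)
  finally have "(A* P)^2 - Q^2 = EE" .
  hence "Q^2 \<le> (A* P)^2" using EEp by linarith
  moreover have "0 \<le> A* P" using Pp A by simp
  ultimately have "Q \<le> A* P" by (rule sq_le)
  thus ?thesis using e by linarith
qed

lemma poly5_id: "s = z + 2 \<Longrightarrow> (t^2 + 4* t + s^2) * (9* t^2 + 6* t* s + 12* t + 4* s^2)^2 - (9* t^3 + 6* t^2* s + 30* t^2 + 6* t* s^2 + 20* t* s + 4* s^3)^2 = (45* t^4* z^2 + 36* t^4* z + 12* t^3* z^3 + 216* t^3* z^2 + 96* t^3* z + 40* t^2* z^4 + 176* t^2* z^3 + 224* t^2* z^2 + 64* t^2* z)" for t A s z :: real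
  by algebra

lemma poly5:
  fixes t A s :: real
  assumes "s \<ge> 2" and t: "t \<ge> 0" and A: "A > 0" and A2: "A^2 = t^2 + 4* t + s^2"
  shows "(2* A^2 + t*(t+2))*(3* t+2* s) - A*(2* s+3* t)*(3* t+2* s) + 6*(s-2)* t* A \<le> 0"
proof -
  define z where "z = s - 2"
  have sv: "s = z + 2" unfolding z_def by simp
  have hyp: "z \<ge> 0" "t \<ge> 0" using assms unfolding z_def by auto
  define P where "P = (9* t^2 + 6* t* s + 12* t + 4* s^2)"
  define Q where "Q = (9* t^3 + 6* t^2* s + 30* t^2 + 6* t* s^2 + 20* t* s + 4* s^3)"
  have e: "- ((2* A^2 + t*(t+2))*(3* t+2* s) - A*(2* s+3* t)*(3* t+2* s) + 6*(s-2)* t* A) = A* P - Q"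
    unfolding P_def Q_def using A2 by algebra
  have Pp0: "0 \<le> (9* t^2 + 6* t* s + 12* t + 4* s^2)" using assms by (auto intro!: add_nonneg_nonneg mult_nonneg_nonneg simp: power2_eq_square algebra_simps)
  have Pp: "0 \<le> P" unfolding P_def by (rule Pp0)
  define EE where "EE = (45* t^4* z^2 + 36* t^4* z + 12* t^3* z^3 + 216* t^3* z^2 + 96* t^3* z + 40* t^2* z^4 + 176* t^2* z^3 + 224* t^2* z^2 + 64* t^2* z)"
  have EEp: "EE \<ge> 0" unfolding EE_def by (auto intro!: add_nonneg_nonneg mult_nonneg_nonneg simp: hyp)
  have "(A* P)^2 - Q^2 = (t^2 + 4* t + s^2) * P^2 - Q^2" by (simp add: power_mult_distrib A2)
  also have "... = EE" unfolding P_def Q_def EE_def using sv by (rule poly5_id)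
  finally have "(A* P)^2 - Q^2 = EE" .
  hence "Q^2 \<le> (A* P)^2" using EEp by linarith
  moreover have "0 \<le> A* P" using Pp A by simp
  ultimately have "Q \<le> A* P" by (rule sq_le)
  thus ?thesis using e by linarith
qed

lemma poly6_id: "N = M + 4 \<Longrightarrow> (2* t^2* N + 2* t^2 + 14* t* N + 8* N^2)^2 - ((t+2)^2 + (2* N-4)) * (2* t* N + 2* t + 8* N)^2 = (8192) + (8* t^3* M^2 + 56* t^3* M + 80* t^3 + 24* t^2* M^3 + 308* t^2* M^2 + 1176* t^2* M + 1312* t^2 + 160* t* M^3 + 1600* t* M^2 + 5120* t* M + 5120* t + 64* M^4 + 896* M^3 + 4608* M^2 + 10240* M)" for N t M :: real
  by algebra

lemma poly6:
  fixes N t A :: real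
  assumes "N \<ge> 4" and t: "t \<ge> 0" and A: "A > 0" and A2: "A^2 = (t+2)^2 + (2* N-4)"
  shows "t* A^2 + N* t* A - (t+2* N)*(2* A^2 - t*(t+2) - N* A) + 2* t* A - 2* N*(N-4)* A < 0"
proof -
  define M where "M = N - 4"
  have NM: "N = M + 4" unfolding M_def by simp
  have hyp: "M \<ge> 0" "t \<ge> 0" using assms unfolding M_def by auto
  define P where "P = (2* t* N + 2* t + 8* N)"
  define Q where "Q = (2* t^2* N + 2* t^2 + 14* t* N + 8* N^2)"
  have e: "t* A^2 + N* t* A - (t+2* N)*(2* A^2 - t*(t+2) - N* A) + 2* t* A - 2* N*(N-4)* A = A* P - Q"
    unfolding P_def Q_def using A2 by algebra
  have Qp: "0 \<le> Q" unfolding P_def Q_def using assms by (auto intro!: add_nonneg_nonneg mult_nonneg_nonneg)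
  define EE where "EE = (8192) + (8* t^3* M^2 + 56* t^3* M + 80* t^3 + 24* t^2* M^3 + 308* t^2* M^2 + 1176* t^2* M + 1312* t^2 + 160* t* M^3 + 1600* t* M^2 + 5120* t* M + 5120* t + 64* M^4 + 896* M^3 + 4608* M^2 + 10240* M)"
  have EEp: "EE > 0" unfolding EE_def by (intro add_pos_nonneg) (auto intro!: add_nonneg_nonneg mult_nonneg_nonneg simp: hyp)
  have "Q^2 - (A* P)^2 = Q^2 - ((t+2)^2 + (2* N-4)) * P^2" by (simp add: power_mult_distrib A2)
  also have "... = EE" unfolding P_def Q_def EE_def using NM by (rule poly6_id)
  finally have "Q^2 - (A* P)^2 = EE" .
  hence "(A* P)^2 < Q^2" using EEp by linarith
  hence "A* P < Q" using Qp by (rule sq_lt)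
  thus ?thesis using e by linarith
qed



lemma gen: "inverse (S::real) / 2 * (2 * u * (1 / m)) = u / (m * S)"
  by (simp add: field_simps)

lemma a_pos:
  assumes "n \<ge> 4" "K > 0"
  shows "(x / (real n - 1) + 2 * K)^2 + (2 * real n - 4) * K^2 > 0"
proof -
  have "(2 * real n - 4) * K^2 > 0" using assms by simp
  thus ?thesis by (smt (verit) zero_le_power2)
qed

lemma a_fun_pos: assumes "n \<ge> 4" "K > 0" shows "a_fun n K x > 0"
  unfolding a_fun_def using a_pos[OF assms] by simp

lemma a_deriv:
  assumes "n \<ge> 4" "K > 0"
  shows "(a_fun n K has_real_derivative (x / (real n - 1) + 2 * K) / ((real n - 1) * a_fun n K x)) (at x)"
proof -
  have p: "(x / (real n - 1) + 2 * K)^2 + (2 * real n - 4) * K^2 > 0" using a_pos[OF assms] .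
  have m: "real n - 1 > 0" using assms by simp
  let ?g = "\<lambda>x. (x / (real n - 1) + 2 * K)^2 + (2 * real n - 4) * K^2"
  have g: "(?g has_real_derivative 2 * (x / (real n - 1) + 2 * K) * (1 / (real n - 1))) (at x)"
    using m by (auto intro!: derivative_eq_intros)
  have "((\<lambda>x. sqrt (?g x)) has_real_derivative inverse (sqrt (?g x)) / 2 * (2 * (x / (real n - 1) + 2 * K) * (1 / (real n - 1)))) (at x)"
    by (rule DERIV_chain2[OF DERIV_real_sqrt[OF p] g])
  moreover have "inverse (sqrt (?g x)) / 2 * (2 * (x / (real n - 1) + 2 * K) * (1 / (real n - 1))) = (x / (real n - 1) + 2 * K) / ((real n - 1) * a_fun n K x)"
    unfolding a_fun_def by (rule gen)
  ultimately show ?thesis unfolding a_fun_def[abs_def] by simp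
qed

lemma alg:
  fixes m A u c :: real
  assumes "m > 0" "A > 0" "A^2 = u^2 + c"
  shows "((1 / m) * (m * A) - u * (m * (u / (m * A)))) / (m * A)^2 = c / (m^2 * A^3)"
proof -
  have "(1 / m) * (m * A) - u * (m * (u / (m * A))) = (A^2 - u^2) / A"
    using assms(1,2) by (simp add: field_simps power2_eq_square)
  also have "... = c / A" using assms(3) by simp
  finally have e: "(1 / m) * (m * A) - u * (m * (u / (m * A))) = c / A" .
  have "c / A / (m * A)^2 = c / (m^2 * A^3)" using assms(1,2) by (simp add: field_simps power2_eq_square power3_eq_cube)
  thus ?thesis by (simp only: e)
qed

definition A1 where "A1 n K x = (x / (real n - 1) + 2 * K) / ((real n - 1) * a_fun n K x) - 1 / real n"

lemma ar_deriv:
  assumes "n \<ge> 4" "K > 0"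
  shows "(ar_fun n K has_real_derivative A1 n K x) (at x)"
  unfolding ar_fun_def[abs_def] A1_def using assms
  by (auto intro!: derivative_eq_intros a_deriv[OF assms])

lemma A1_deriv:
  assumes "n \<ge> 4" "K > 0"
  shows "(A1 n K has_real_derivative (2 * real n - 4) * K^2 / ((real n - 1)^2 * a_fun n K x ^ 3)) (at x)"
proof -
  have p: "a_fun n K x > 0" using a_fun_pos[OF assms] .
  have sq: "a_fun n K x ^ 2 = (x / (real n - 1) + 2 * K)^2 + (2 * real n - 4) * K^2"
    unfolding a_fun_def using a_pos[OF assms] by (simp add: less_imp_le)
  have m: "real n - 1 > 0" using assms by simp
  have "(A1 n K has_real_derivative ((1 / (real n - 1)) * ((real n - 1) * a_fun n K x) - (x / (real n - 1) + 2 * K) * ((real n - 1) * ((x / (real n - 1) + 2 * K) / ((real n - 1) * a_fun n K x)))) / ((real n - 1) * a_fun n K x)^2) (at x)"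
    unfolding A1_def[abs_def] using p m
    by (auto intro!: derivative_eq_intros a_deriv[OF assms] simp: power2_eq_square)
  moreover have "((1 / (real n - 1)) * ((real n - 1) * a_fun n K x) - (x / (real n - 1) + 2 * K) * ((real n - 1) * ((x / (real n - 1) + 2 * K) / ((real n - 1) * a_fun n K x)))) / ((real n - 1) * a_fun n K x)^2
     = (2 * real n - 4) * K^2 / ((real n - 1)^2 * a_fun n K x ^ 3)"
    using alg[OF m p sq] .
  ultimately show ?thesis by simp
qed

lemma derivs:
  assumes "n \<ge> 4" "K > 0"
  shows "deriv (ar_fun n K) x = A1 n K x" "deriv (deriv (ar_fun n K)) x = (2 * real n - 4) * K^2 / ((real n - 1)^2 * a_fun n K x ^ 3)"
proof -
  have e: "deriv (ar_fun n K) = A1 n K" using ar_deriv[OF assms] DERIV_imp_deriv by blast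
  show "deriv (ar_fun n K) x = A1 n K x" using e by simp
  show "deriv (deriv (ar_fun n K)) x = (2 * real n - 4) * K^2 / ((real n - 1)^2 * a_fun n K x ^ 3)"
    using e A1_deriv[OF assms] DERIV_imp_deriv by metis
qed




lemma ineq1:
  fixes N K x A :: real
  assumes N: "N \<ge> 4" and K: "K > 0" and x: "x \<ge> 0" and A: "A > 0"
    and A2: "A^2 = (x/(N-1)+2* K)^2 + (2* N-4)* K^2"
  shows "4 * x * ((x/(N-1)+2* K)/((N-1)* A) - 1/N)^2 / (A - x/N) < 1"
proof -
  define t where "t = x/(N-1)"
  have m: "N - 1 > 0" using N by simp
  have xt: "x = (N-1)* t" unfolding t_def using m by simp
  have t: "t \<ge> 0" unfolding t_def using x m by simp
  define \<tau> where "\<tau> = t/K"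
  define \<alpha> where "\<alpha> = A/K"
  have t\<tau>: "t = K*\<tau>" and A\<alpha>: "A = K*\<alpha>" unfolding \<tau>_def \<alpha>_def using K by auto
  have \<tau>: "\<tau> \<ge> 0" and \<alpha>: "\<alpha> > 0" unfolding \<tau>_def \<alpha>_def using K t A by auto
  have "K^2 * \<alpha>^2 = K^2 * ((\<tau>+2)^2 + (2* N-4))"
    using A2 unfolding t_def[symmetric] t\<tau> A\<alpha> by (simp add: algebra_simps power2_eq_square)
  hence \<alpha>2: "\<alpha>^2 = (\<tau>+2)^2 + (2* N-4)" using K by simp
  have p: "(N*\<alpha> - (N-1)*\<tau>)* N*(N-1)*\<alpha>^2 - 4*\<tau>*(N*(\<tau>+2) - (N-1)*\<alpha>)^2 > 0"
    by (rule poly1[OF N \<tau> \<alpha> \<alpha>2])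
  have "(N* A - (N-1)* t)* N*(N-1)* A^2 - 4* t*(N*(t+2* K) - (N-1)* A)^2
     = K^3 * ((N*\<alpha> - (N-1)*\<tau>)* N*(N-1)*\<alpha>^2 - 4*\<tau>*(N*(\<tau>+2) - (N-1)*\<alpha>)^2)"
    unfolding t\<tau> A\<alpha> by algebra
  moreover have "K^3 * ((N*\<alpha> - (N-1)*\<tau>)* N*(N-1)*\<alpha>^2 - 4*\<tau>*(N*(\<tau>+2) - (N-1)*\<alpha>)^2) > 0"
    using p K by simp
  ultimately have G: "(N* A - (N-1)* t)* N*(N-1)* A^2 > 4* t*(N*(t+2* K) - (N-1)* A)^2"
    by linarith
  have "4* t*(N*(t+2* K) - (N-1)* A)^2 \<ge> 0" using t by simp
  hence "(N* A - (N-1)* t)*(N*(N-1)* A^2) > 0" using G by (simp add: mult.assoc)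
  moreover have "N*(N-1)* A^2 > 0" using N A m by simp
  ultimately have ar: "N* A - (N-1)* t > 0" by (simp add: zero_less_mult_iff)
  have D: "N*(N-1)* A^2*(N* A - (N-1)* t) > 0" using ar N A m by simp
  have x1: "x/(N-1) = t" unfolding t_def ..
  have r1: "(t+2* K)/((N-1)* A) - 1/N = (N*(t+2* K) - (N-1)* A)/(N*(N-1)* A)"
    using m N A by (simp add: field_simps)
  have r2: "A - x/N = (N* A - (N-1)* t)/N" unfolding xt using N by (simp add: field_simps)
  have gen: "4*(m* t)*(B/(N* m* A))^2 / (C/N) = 4* t* B^2/(N* m* A^2* C)"
    if "m > 0" "N > 0" "A > 0" "C > 0" for m t B N A C :: real
    using that by (simp add: field_simps power2_eq_square)
  have "4 * x * ((x/(N-1)+2* K)/((N-1)* A) - 1/N)^2 / (A - x/N)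
      = 4* t*(N*(t+2* K) - (N-1)* A)^2 / (N*(N-1)* A^2*(N* A - (N-1)* t))"
    unfolding x1 r1 r2 unfolding xt using m N A ar by (intro gen) auto
  also have "... < 1" using G D by (simp add: algebra_simps)
  finally show ?thesis .
qed



lemma cubic: fixes u A :: real assumes "0 \<le> u" "u \<le> A" "A > 0"
  shows "3* u* A^2 - 2* u^3 < 3/2 * A^3"
proof -
  have e: "1500 * A^3 - 1000*(3* u* A^2 - 2* u^3) = 4*(10* u - 7* A)^2*(5* u + 7* A) + 60*(A - u)* A^2 + 68* A^3"
    by (simp add: algebra_simps power2_eq_square power3_eq_cube)
  define p1 where "p1 = 4*(10* u - 7* A)^2*(5* u + 7* A)"
  define p2 where "p2 = 60*(A - u)* A^2"
  define p3 where "p3 = 68* A^3"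
  define Z where "Z = 3* u* A^2 - 2* u^3"
  define W where "W = A^3"
  have "0 \<le> p1" unfolding p1_def using assms by simp
  moreover have "0 \<le> p2" unfolding p2_def using assms by simp
  moreover have "0 < p3" unfolding p3_def using assms by simp
  moreover have "1500 * W - 1000 * Z = p1 + p2 + p3" using e unfolding p1_def p2_def p3_def Z_def W_def .
  ultimately have "Z < 3/2 * W" by linarith
  thus ?thesis unfolding Z_def W_def .
qed

lemma ineq2:
  fixes N K x A :: real
  assumes N: "N \<ge> 4" and K: "K > 0" and x: "x \<ge> 0" and A: "A > 0"
    and A2: "A^2 = (x/(N-1)+2* K)^2 + (2* N-4)* K^2"
  shows "2 * x * ((2* N-4)* K^2 / ((N-1)^2 * A^3)) + ((x/(N-1)+2* K)/((N-1)* A) - 1/N) < 2*(N-1)/(N*(N+2))"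
proof -
  define t where "t = x/(N-1)"
  have m: "N - 1 > 0" using N by simp
  have xt: "x = (N-1)* t" unfolding t_def using m by simp
  have t: "t \<ge> 0" unfolding t_def using x m by simp
  have x1: "x/(N-1) = t" unfolding t_def ..
  define u where "u = t + 2* K"
  define c where "c = (2* N-4)* K^2"
  have u: "0 \<le> u" "t \<le> u" unfolding u_def using t K by auto
  have c: "c = A^2 - u^2" unfolding c_def u_def using A2 x1 by simp
  have c0: "c \<ge> 0" unfolding c_def using N by simp
  have uA: "u \<le> A" proof -
    have "u^2 \<le> A^2" using c c0 by simp
    thus ?thesis using power2_le_imp_le[of u A] A by simp
  qed
  define X where "X = 2* t* c/A^3 + u/A"
  have lhs: "2 * x * ((2* N-4)* K^2 / ((N-1)^2 * A^3)) + ((x/(N-1)+2* K)/((N-1)* A) - 1/N) = X/(N-1) - 1/N"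
  proof -
    have g1: "2*(m* t)*(c/(m^2* B)) = (2* t* c/B)/m" if "m \<noteq> 0" for m t c B :: real
      using that by (simp add: field_simps power2_eq_square)
    have g2: "u/(m* A) = (u/A)/m" for m u A :: real by simp
    have "2 * x * ((2* N-4)* K^2 / ((N-1)^2 * A^3)) = (2* t* c/A^3)/(N-1)"
      unfolding xt c_def[symmetric] using m by (intro g1) simp
    moreover have "(x/(N-1)+2* K)/((N-1)* A) = (u/A)/(N-1)" unfolding x1 u_def[symmetric] by (rule g2)
    ultimately show ?thesis unfolding X_def by (simp add: add_divide_distrib)
  qed
  have "X * A^3 = 2* t* c + u* A^2" unfolding X_def using A by (simp add: field_simps power2_eq_square power3_eq_cube)
  also have "... \<le> 2* u* c + u* A^2" using u c0 by (simp add: mult_right_mono)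
  also have "... = 3* u* A^2 - 2* u^3" unfolding c by (simp add: algebra_simps power2_eq_square power3_eq_cube)
  also have "... < 3/2 * A^3" by (rule cubic[OF u(1) uA A])
  finally have "X < 3/2" using A by simp
  also have "3/2 \<le> 3*(N-1)/(N+2)" using N by (simp add: field_simps)
  finally have "X/(N-1) < 3/(N+2)" using m N by (simp add: field_simps)
  hence "X/(N-1) - 1/N < 3/(N+2) - 1/N" by simp
  also have "3/(N+2) - 1/N = 2*(N-1)/(N*(N+2))" using N by (simp add: field_simps)
  finally show ?thesis unfolding lhs .
qed



lemma ineq3:
  fixes N K x A :: real
  assumes N: "N \<ge> 4" and K: "K > 0" and x: "x \<ge> 0" and A: "A > 0"
    and A2: "A^2 = (x/(N-1)+2* K)^2 + (2* N-4)* K^2"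
  shows "(N-2)/sqrt(N*(N-1)) * sqrt(x*(A - x/N)) + (A - x/N) < x/N + N* K"
proof -
  define t where "t = x/(N-1)"
  have m: "N - 1 > 0" using N by simp
  have xt: "x = (N-1)* t" unfolding t_def using m by simp
  have t: "t \<ge> 0" unfolding t_def using x m by simp
  have x1: "x/(N-1) = t" unfolding t_def ..
  define u where "u = t + 2* K"
  have A2': "A^2 = u^2 + 2*(N-2)* K^2" using A2 unfolding x1 u_def by (simp add: algebra_simps)
  define M where "M = N - 4"
  have NM: "N = M + 4" unfolding M_def by simp
  have M: "M \<ge> 0" unfolding M_def using N by simp
  have NA: "N* A < 2*(N-1)* t + N^2* K"
  proof -
    have e: "(2*(N-1)* t + N^2* K)^2 - (N* A)^2 = t^2*((N-2)*(3* N-2)) + 4* N^2*(N-2)* K* t + N^3*(N-2)* K^2"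
      unfolding power_mult_distrib A2' u_def by (simp add: algebra_simps power2_eq_square power3_eq_cube)
    have "0 \<le> t^2*((N-2)*(3* N-2))" using N by simp
    moreover have "0 \<le> 4* N^2*(N-2)* K* t" using N K t by simp
    moreover have "0 < N^3*(N-2)* K^2" using N K by simp
    ultimately have "(N* A)^2 < (2*(N-1)* t + N^2* K)^2" using e by linarith
    moreover have "0 \<le> 2*(N-1)* t + N^2* K" using N K t by simp
    ultimately show ?thesis by (rule sq_lt)
  qed
  define R where "R = 2* x/N + N* K - A"
  have R: "R = (2*(N-1)* t + N^2* K - N* A)/N" unfolding R_def xt using N by (simp add: field_simps power2_eq_square)
  have Rp: "R > 0" unfolding R using NA N by simp
  define q where "q = u^2 + (N-2)* K^2"
  have q: "A* u < q"
  proof -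
    have "q^2 - (A* u)^2 = (N-2)^2* K^4" unfolding q_def power_mult_distrib A2'
      by (simp add: algebra_simps power2_eq_square power4_eq_xxxx)
    moreover have "(N-2)^2* K^4 > 0" using N K by simp
    ultimately have "(A* u)^2 < q^2" by linarith
    moreover have "0 \<le> q" unfolding q_def using N by simp
    ultimately show ?thesis by (rule sq_lt)
  qed
  have G3: "(2*(N-1)* t + N^2* K - N* A)^2 - (N-2)^2* t*(N* A - (N-1)* t) = N^3*(q - A* u)"
    unfolding q_def using A2' unfolding u_def by algebra
  have G3p: "(N-2)^2* t*(N* A - (N-1)* t) < (2*(N-1)* t + N^2* K - N* A)^2"
  proof -
    have "N^3*(q - A* u) > 0" using q N by simp
    thus ?thesis using G3 by linarith
  qed
  define Y where "Y = (N-2)^2/(N*(N-1)) * (x*(A - x/N))"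
  have Y: "Y = (N-2)^2* t*(N* A - (N-1)* t)/N^2" unfolding Y_def xt using m N
    by (simp add: field_simps power2_eq_square)
  have R2: "R^2 = (2*(N-1)* t + N^2* K - N* A)^2/N^2" unfolding R by (simp add: power_divide)
  have YR: "Y < R^2" unfolding Y R2 using G3p N by (simp add: divide_strict_right_mono)
  have ar: "A - x/N \<ge> 0"
  proof -
    have "u^2 \<le> A^2" using A2' N by simp
    hence "u \<le> A" using power2_le_imp_le[of u A] A by simp
    moreover have "x/N \<le> u" unfolding xt u_def using N t K by (simp add: field_simps)
    ultimately show ?thesis by simp
  qed
  have Y0: "Y \<ge> 0" unfolding Y_def using N x ar by simp
  have sY: "sqrt Y = (N-2)/sqrt(N*(N-1)) * sqrt(x*(A - x/N))"
    unfolding Y_def using N by (simp add: real_sqrt_mult real_sqrt_divide)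
  have "sqrt Y < sqrt (R^2)" using YR Y0 by (simp only: real_sqrt_less_mono)
  hence "sqrt Y < R" using Rp by simp
  thus ?thesis unfolding sY[symmetric] R_def by linarith
qed



lemma sqrt_facts:
  fixes N :: real assumes N: "N \<ge> 4"
  shows "sqrt(2* N) \<ge> 2" "sqrt(2* N)^2 = 2* N" "sqrt(2+sqrt(2* N))^2 = 2 + sqrt(2* N)"
    "sqrt(2+sqrt(2* N)) \<ge> 219/100" "sqrt(2+sqrt(2* N)) > 0"
proof -
  have s2: "sqrt(2* N)^2 = 2* N" using N by simp
  have "(28/10)^2 \<le> 2* N" using N by (simp add: power2_eq_square)
  hence s28: "28/10 \<le> sqrt(2* N)" by (rule real_le_rsqrt)
  show "sqrt(2* N) \<ge> 2" using s28 by simp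
  show "sqrt(2* N)^2 = 2* N" by (rule s2)
  show "sqrt(2+sqrt(2* N))^2 = 2 + sqrt(2* N)" using s28 by simp
  have "(219/100)^2 \<le> 2 + sqrt(2* N)" using s28 by (simp add: power2_eq_square)
  hence "sqrt((219/100)^2) \<le> sqrt(2+sqrt(2* N))" by (rule real_sqrt_le_mono)
  thus "sqrt(2+sqrt(2* N)) \<ge> 219/100" by simp
  thus "sqrt(2+sqrt(2* N)) > 0" by linarith
qed

lemma ineq4:
  fixes N K x A :: real
  assumes N: "N \<ge> 4" and K: "K > 0" and x: "x \<ge> 0" and A: "A > 0"
    and A2: "A^2 = (x/(N-1)+2* K)^2 + (2* N-4)* K^2"
  shows "N* K*((A - x/N) + x*((x/(N-1)+2* K)/((N-1)* A) - 1/N)) - A*((A - x/N) - x*((x/(N-1)+2* K)/((N-1)* A) - 1/N))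
      \<ge> 2* N*(N-2)*(N-1)^2* K^4 / (x + sqrt(2+sqrt(2* N))*(N-1)* K)^2"
proof -
  define t where "t = x/(N-1)"
  have m: "N - 1 > 0" using N by simp
  have xt: "x = (N-1)* t" unfolding t_def using m by simp
  have t: "t \<ge> 0" unfolding t_def using x m by simp
  have x1: "x/(N-1) = t" unfolding t_def ..
  define u where "u = t + 2* K"
  have A2': "A^2 = u^2 + 2*(N-2)* K^2" using A2 unfolding x1 u_def by (simp add: algebra_simps)
  define s where "s = sqrt(2* N)"
  define w where "w = sqrt(2+s)"
  have s2: "s^2 = 2* N" and w2: "w^2 = 2 + s" and w: "w \<ge> 219/100" and s0: "s \<ge> 0" and wp: "w > 0"
    using sqrt_facts[OF N] unfolding s_def w_def by auto
  have sw: "s = w^2 - 2" using w2 by simp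
  define \<tau> where "\<tau> = t/K"
  define \<alpha> where "\<alpha> = A/K"
  have t\<tau>: "t = K*\<tau>" and A\<alpha>: "A = K*\<alpha>" unfolding \<tau>_def \<alpha>_def using K by auto
  have \<tau>: "\<tau> \<ge> 0" and \<alpha>: "\<alpha> > 0" unfolding \<tau>_def \<alpha>_def using K t A by auto
  have "K^2 * \<alpha>^2 = K^2 * (\<tau>^2 + 4*\<tau> + s^2)"
    using A2' unfolding u_def t\<tau> A\<alpha> s2 by (simp add: algebra_simps power2_eq_square)
  hence \<alpha>2: "\<alpha>^2 = \<tau>^2 + 4*\<tau> + s^2" using K by simp
  have p: "(\<alpha> - \<tau>)*(\<tau>+w)^2 \<ge> \<alpha>*(\<alpha>+\<tau>+2)"
    by (rule poly4[OF s0 w sw \<tau> \<alpha> \<alpha>2])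
  have "(A - t)*(t+w* K)^2 - K* A*(A+u) = K^3 * ((\<alpha> - \<tau>)*(\<tau>+w)^2 - \<alpha>*(\<alpha>+\<tau>+2))"
    unfolding u_def t\<tau> A\<alpha> by algebra
  moreover have "K^3 * ((\<alpha> - \<tau>)*(\<tau>+w)^2 - \<alpha>*(\<alpha>+\<tau>+2)) \<ge> 0" using p K by simp
  ultimately have P4: "K* A*(A+u) \<le> (A - t)*(t+w* K)^2" by linarith
  have tw: "t + w* K > 0" using t wp K by (intro add_nonneg_pos) simp_all
  have uA: "u \<le> A"
  proof -
    have "u^2 \<le> A^2" using A2' N by simp
    thus ?thesis using power2_le_imp_le[of u A] A by simp
  qed
  define r where "r = (x/(N-1)+2* K)/((N-1)* A) - 1/N"
  have r: "r*(N*(N-1)* A) = N* u - (N-1)* A" unfolding r_def x1 u_def[symmetric] using m N A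
    by (simp add: field_simps)
  define L where "L = N* K*((A - x/N) + x* r) - A*((A - x/N) - x* r)"
  have LA: "L*(N*(N-1)* A) = N* K*((N-1)* A*(N* A - x) + x*(N* u - (N-1)* A)) - A*((N-1)* A*(N* A - x) - x*(N* u - (N-1)* A))"
  proof -
    have "L*(N*(N-1)* A) = N* K*((N-1)* A*((A - x/N)* N) + x*(r*(N*(N-1)* A))) - A*((N-1)* A*((A - x/N)* N) - x*(r*(N*(N-1)* A)))"
      unfolding L_def by (simp add: algebra_simps)
    also have "(A - x/N)* N = N* A - x" using N by (simp add: field_simps)
    finally show ?thesis unfolding r .
  qed
  have "N* K*((N-1)* A*(N* A - x) + x*(N* u - (N-1)* A)) - A*((N-1)* A*(N* A - x) - x*(N* u - (N-1)* A))
      = (N* K*(A-u)*(A-t)/A) * (N*(N-1)* A)"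
  proof -
    have e1: "N* K*((N-1)* A*(N* A - x) + x*(N* u - (N-1)* A)) - A*((N-1)* A*(N* A - x) - x*(N* u - (N-1)* A))
      = N^2* K*(N-1)*(A-u)*(A-t)"
      unfolding xt using A2' unfolding u_def by algebra
    have g: "(Z/A) * (N*(N-1)* A) = Z*(N*(N-1))" for Z using A by simp
    have e2: "(N* K*(A-u)*(A-t)/A) * (N*(N-1)* A) = N^2* K*(N-1)*(A-u)*(A-t)"
      unfolding g by (simp add: power2_eq_square algebra_simps)
    show ?thesis unfolding e1 e2 ..
  qed
  hence h1: "L*(N*(N-1)* A) = (N* K*(A-u)*(A-t)/A) * (N*(N-1)* A)" using LA by simp
  have nz: "N*(N-1)* A \<noteq> 0" using m N A by simp
  have L: "L = N* K*(A-u)*(A-t)/A" using h1 mult_right_cancel[OF nz] by blast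
  have Rh: "2* N*(N-2)*(N-1)^2* K^4 / (x + w*(N-1)* K)^2 = N* K*(A-u)*(K*(A+u)/(t+w* K)^2)"
  proof -
    have "x + w*(N-1)* K = (N-1)*(t+w* K)" unfolding xt by (simp add: algebra_simps)
    hence "2* N*(N-2)*(N-1)^2* K^4 / (x + w*(N-1)* K)^2 = 2* N*(N-2)* K^4 / (t+w* K)^2"
      using m by (simp add: power_mult_distrib)
    also have "2* N*(N-2)* K^4 = N* K*(A-u)*(K*(A+u))"
      using A2' by algebra
    finally show ?thesis by simp
  qed
  have key: "K*(A+u)/(t+w* K)^2 \<le> (A-t)/A"
    using P4 tw A by (simp add: divide_simps mult.commute mult.left_commute)
  have "N* K*(A-u)*(K*(A+u)/(t+w* K)^2) \<le> N* K*(A-u)*((A-t)/A)"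
    using key uA N K by (intro mult_left_mono) auto
  thus ?thesis unfolding r_def[symmetric] L_def[symmetric] w_def[symmetric] s_def[symmetric] Rh L
    by simp
qed



lemma ineq5:
  fixes N K x A :: real
  assumes N: "N \<ge> 4" and K: "K > 0" and x: "x \<ge> 0" and A: "A > 0"
    and A2: "A^2 = (x/(N-1)+2* K)^2 + (2* N-4)* K^2"
  shows "2*(A - x/N) - x/N + x*((x/(N-1)+2* K)/((N-1)* A) - 1/N)
     \<le> 2* sqrt(2* N)* K - (N-4)* x/(N*(N-1)) - 6*(sqrt(2* N)-2)* K* x/(3* x + 2* sqrt(2* N)*(N-1)* K)"
proof -
  define t where "t = x/(N-1)"
  have m: "N - 1 > 0" using N by simp
  have xt: "x = (N-1)* t" unfolding t_def using m by simp
  have t: "t \<ge> 0" unfolding t_def using x m by simp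
  have x1: "x/(N-1) = t" unfolding t_def ..
  define u where "u = t + 2* K"
  have A2': "A^2 = u^2 + 2*(N-2)* K^2" using A2 unfolding x1 u_def by (simp add: algebra_simps)
  define s where "s = sqrt(2* N)"
  have s2: "s^2 = 2* N" and s: "s \<ge> 2"
    using sqrt_facts[OF N] unfolding s_def by auto
  define T where "T = 3* t + 2* s* K"
  have T: "T > 0" unfolding T_def using t s K by (intro add_nonneg_pos) simp_all
  define \<tau> where "\<tau> = t/K"
  define \<alpha> where "\<alpha> = A/K"
  have t\<tau>: "t = K*\<tau>" and A\<alpha>: "A = K*\<alpha>" unfolding \<tau>_def \<alpha>_def using K by auto
  have \<tau>: "\<tau> \<ge> 0" and \<alpha>: "\<alpha> > 0" unfolding \<tau>_def \<alpha>_def using K t A by auto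
  have "K^2 * \<alpha>^2 = K^2 * (\<tau>^2 + 4*\<tau> + s^2)"
    using A2' unfolding u_def t\<tau> A\<alpha> s2 by (simp add: algebra_simps power2_eq_square)
  hence \<alpha>2: "\<alpha>^2 = \<tau>^2 + 4*\<tau> + s^2" using K by simp
  have p: "(2*\<alpha>^2 + \<tau>*(\<tau>+2))*(3*\<tau>+2* s) - \<alpha>*(2* s+3*\<tau>)*(3*\<tau>+2* s) + 6*(s-2)*\<tau>*\<alpha> \<le> 0"
    by (rule poly5[OF s \<tau> \<alpha> \<alpha>2])
  define F where "F = (2* A^2 + t*(t+2* K))* T - A* T* T + 6*(s-2)* K* t* A"
  have "F = K^3 * ((2*\<alpha>^2 + \<tau>*(\<tau>+2))*(3*\<tau>+2* s) - \<alpha>*(2* s+3*\<tau>)*(3*\<tau>+2* s) + 6*(s-2)*\<tau>*\<alpha>)"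
    unfolding F_def T_def t\<tau> A\<alpha> by algebra
  hence F: "F \<le> 0" using p K by (simp add: mult_nonneg_nonpos)
  define D where "D = 2* A + t* u/A - 3* t - 2* s* K + 6*(s-2)* K* t/T"
  have "D*(A* T) = 2* A* A* T + t* u* T - 3* t* A* T - 2* s* K* A* T + 6*(s-2)* K* t* A" unfolding D_def using A T
    by (simp add: field_simps)
  also have "... = F" unfolding F_def T_def u_def by algebra
  finally have DAT: "D*(A* T) = F" .
  have D: "D \<le> 0"
  proof -
    have "D*(A* T) \<le> 0" using DAT F by simp
    moreover have "A* T > 0" using A T by simp
    ultimately show ?thesis using A T by (auto simp: mult_le_0_iff)
  qed
  have e1: "x*((x/(N-1)+2* K)/((N-1)* A) - 1/N) = t* u/A - (N-1)* t/N"
    unfolding x1 u_def[symmetric] unfolding xt using m N A by (simp add: field_simps)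
  have e2: "(N-4)* x/(N*(N-1)) = (N-4)* t/N" unfolding xt using m N by (simp add: field_simps)
  have e3: "6*(s-2)* K* x/(3* x + 2* s*(N-1)* K) = 6*(s-2)* K* t/T"
  proof -
    have "3* x + 2* s*(N-1)* K = (N-1)* T" unfolding xt T_def by (simp add: algebra_simps)
    thus ?thesis unfolding xt using m by simp
  qed
  have e4: "x/N = (N-1)* t/N" unfolding xt ..
  have "2*(A - x/N) - x/N + x*((x/(N-1)+2* K)/((N-1)* A) - 1/N)
     - (2* s* K - (N-4)* x/(N*(N-1)) - 6*(s-2)* K* x/(3* x + 2* s*(N-1)* K))
     = 2* A - 3*((N-1)* t/N) + t* u/A - (N-1)* t/N - 2* s* K + (N-4)* t/N + 6*(s-2)* K* t/T"
    unfolding e1 e2 e3 e4 by simp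
  also have "... = D" unfolding D_def using N by (simp add: field_simps)
  finally show ?thesis using D unfolding s_def by linarith
qed



lemma ineq6:
  fixes N K x A :: real
  assumes N: "N \<ge> 4" and K: "K > 0" and x: "x \<ge> 0" and A: "A > 0"
    and A2: "A^2 = (x/(N-1)+2* K)^2 + (2* N-4)* K^2"
  shows "x/(N-1)*(A + N* K) - (x/(N-1) + 2* N* K)*((A - x/N) + A - N* K - x*((x/(N-1)+2* K)/((N-1)* A) - 1/N))
      < - (2* x* K/(N-1)) + 2* N*(N-4)* K^2"
proof -
  define t where "t = x/(N-1)"
  have m: "N - 1 > 0" using N by simp
  have xt: "x = (N-1)* t" unfolding t_def using m by simp
  have t: "t \<ge> 0" unfolding t_def using x m by simp
  have x1: "x/(N-1) = t" unfolding t_def ..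
  define u where "u = t + 2* K"
  have A2': "A^2 = u^2 + 2*(N-2)* K^2" using A2 unfolding x1 u_def by (simp add: algebra_simps)
  define \<tau> where "\<tau> = t/K"
  define \<alpha> where "\<alpha> = A/K"
  have t\<tau>: "t = K*\<tau>" and A\<alpha>: "A = K*\<alpha>" unfolding \<tau>_def \<alpha>_def using K by auto
  have \<tau>: "\<tau> \<ge> 0" and \<alpha>: "\<alpha> > 0" unfolding \<tau>_def \<alpha>_def using K t A by auto
  have "K^2 * \<alpha>^2 = K^2 * ((\<tau>+2)^2 + (2* N-4))"
    using A2' unfolding u_def t\<tau> A\<alpha> by (simp add: algebra_simps power2_eq_square)
  hence \<alpha>2: "\<alpha>^2 = (\<tau>+2)^2 + (2* N-4)" using K by simp
  have p: "\<tau>*\<alpha>^2 + N*\<tau>*\<alpha> - (\<tau>+2* N)*(2*\<alpha>^2 - \<tau>*(\<tau>+2) - N*\<alpha>) + 2*\<tau>*\<alpha> - 2* N*(N-4)*\<alpha> < 0"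
    by (rule poly6[OF N \<tau> \<alpha> \<alpha>2])
  define G where "G = t* A^2 + N* K* t* A - (t+2* N* K)*(2* A^2 - t* u - N* K* A) + 2* t* K* A - 2* N*(N-4)* K^2* A"
  have "G = K^3 * (\<tau>*\<alpha>^2 + N*\<tau>*\<alpha> - (\<tau>+2* N)*(2*\<alpha>^2 - \<tau>*(\<tau>+2) - N*\<alpha>) + 2*\<tau>*\<alpha> - 2* N*(N-4)*\<alpha>)"
    unfolding G_def u_def t\<tau> A\<alpha> by algebra
  hence G: "G < 0" using p K by (simp add: mult_pos_neg)
  define D where "D = t*(A + N* K) - (t + 2* N* K)*(2* A - t* u/A - N* K) + 2* t* K - 2* N*(N-4)* K^2"
  have DA: "D* A = G" unfolding D_def G_def using A by (simp add: field_simps power2_eq_square)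
  have D: "D < 0"
  proof -
    have "D* A < 0" using DA G by simp
    thus ?thesis using A by (auto simp: mult_less_0_iff)
  qed
  have e1: "x*((t+2* K)/((N-1)* A) - 1/N) = t* u/A - (N-1)* t/N"
    unfolding u_def[symmetric] unfolding xt using m N A by (simp add: field_simps)
  have e4: "x/N = (N-1)* t/N" unfolding xt ..
  have e5: "2* x* K/(N-1) = 2* t* K" unfolding xt using m by simp
  have "x/(N-1)*(A + N* K) - (x/(N-1) + 2* N* K)*((A - x/N) + A - N* K - x*((x/(N-1)+2* K)/((N-1)* A) - 1/N))
      - (- (2* x* K/(N-1)) + 2* N*(N-4)* K^2) = D"
    unfolding x1 unfolding e1 e4 e5 D_def by (simp add: algebra_simps)
  thus ?thesis using D by linarith
qed

theorem lemma2p3: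
  fixes n :: nat and K :: real
  assumes "n \<ge> 4" and "K > 0"
  shows "\<forall>x\<ge>0.
    let a = a_fun n K x; ar = ar_fun n K x;
        ar1 = deriv (ar_fun n K) x; ar2 = deriv (deriv (ar_fun n K)) x; N = real n in
    4 * x * ar1^2 / ar < 1 \<and>
    2 * x * ar2 + ar1 < 2 * (N - 1) / (N * (N + 2)) \<and>
    (N - 2) / sqrt (N * (N - 1)) * sqrt (x * ar) + ar < x / N + N * K \<and>
    N * K * (ar + x * ar1) - a * (ar - x * ar1)
      \<ge> 2 * N * (N - 2) * (N - 1)^2 * K^4
          / (x + sqrt (2 + sqrt (2 * N)) * (N - 1) * K)^2 \<and>
    2 * ar - x / N + x * ar1
      \<le> 2 * sqrt (2 * N) * K - (N - 4) * x / (N * (N - 1))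
         - 6 * (sqrt (2 * N) - 2) * K * x / (3 * x + 2 * sqrt (2 * N) * (N - 1) * K) \<and>
    x / (N - 1) * (a + N * K) - (x / (N - 1) + 2 * N * K) * (ar + a - N * K - x * ar1)
      < - (2 * x * K / (N - 1)) + 2 * N * (N - 4) * K^2"
proof (intro allI impI)
  fix x :: real
  assume x: "x \<ge> 0"
  have N: "real n \<ge> 4" using assms(1) by simp
  have K: "K > 0" by (rule assms(2))
  have A: "a_fun n K x > 0" by (rule a_fun_pos[OF assms])
  have A2: "(a_fun n K x)^2 = (x/(real n - 1) + 2* K)^2 + (2* real n - 4)* K^2"
    unfolding a_fun_def using a_pos[OF assms] by (simp add: less_imp_le)
  note d = derivs[OF assms, of x]
  show "let a = a_fun n K x; ar = ar_fun n K x;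
        ar1 = deriv (ar_fun n K) x; ar2 = deriv (deriv (ar_fun n K)) x; N = real n in
    4 * x * ar1^2 / ar < 1 \<and>
    2 * x * ar2 + ar1 < 2 * (N - 1) / (N * (N + 2)) \<and>
    (N - 2) / sqrt (N * (N - 1)) * sqrt (x * ar) + ar < x / N + N * K \<and>
    N * K * (ar + x * ar1) - a * (ar - x * ar1)
      \<ge> 2 * N * (N - 2) * (N - 1)^2 * K^4
          / (x + sqrt (2 + sqrt (2 * N)) * (N - 1) * K)^2 \<and>
    2 * ar - x / N + x * ar1
      \<le> 2 * sqrt (2 * N) * K - (N - 4) * x / (N * (N - 1))
         - 6 * (sqrt (2 * N) - 2) * K * x / (3 * x + 2 * sqrt (2 * N) * (N - 1) * K) \<and>
    x / (N - 1) * (a + N * K) - (x / (N - 1) + 2 * N * K) * (ar + a - N * K - x * ar1)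
      < - (2 * x * K / (N - 1)) + 2 * N * (N - 4) * K^2"
    unfolding Let_def d A1_def ar_fun_def
    using ineq1[OF N K x A A2] ineq2[OF N K x A A2] ineq3[OF N K x A A2]
      ineq4[OF N K x A A2] ineq5[OF N K x A A2] ineq6[OF N K x A A2]
    by blast
qed

end
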